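(* Let $d\geq2$, let $\Omega\subset\mathbb{R}^d$ be open and let $\alpha>0$. For $x\in\Omega$ and $\omega\in\mathbb{S}^{d-1}$ define $\delta_\omega(x):=\inf\{|s|: s\in\mathbb{R},\ x+s\omega\notin\Omega\}$, and for $r>0$ define $\psi_r(x):=\frac{|\Omega\cap B_r(x)|}{|B_r(x)|}$, with $B_r(x)$ the open Euclidean ball and $|\cdot|$ Lebesgue measure. Then for every $x\in\Omega$ and every $r>0$, $$|\mathbb{S}^{d-1}|^{-1}\int_{\mathbb{S}^{d-1}}\frac{d\omega}{\delta_\omega(x)^\alpha}\geq\frac1{r^\alpha}\Bigl(\psi_r(x)^{-\alpha/d}-1\Bigr)$$ and $$|\mathbb{S}^{d-1}|^{-1}\int_{\mathbb{S}^{d-1}}\frac{d\omega}{\delta_\omega(x)^\alpha}\geq\frac1{r^\alpha}\Bigl(\frac{d+\alpha}{\alpha}\Bigr)^{\alpha/d}\frac{d+\alpha}{d}\bigl(1-\psi_r(x)\bigr).$$ Moreover, for every $\ell\geq0$, every $x\in\Omega$ and every $r>0$, $$|\mathbb{S}^{d-1}|^{-1}\int_{\mathbb{S}^{d-1}}\frac{d\omega}{(\delta_\omega(x)+\ell)^\alpha}\geq\frac1{(r+\ell)^\alpha}\bigl(1-\psi_r(x)\bigr).$$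
   Context: $d\omega$ is the surface measure on the unit sphere $\mathbb{S}^{d-1}$ and $|\mathbb{S}^{d-1}|$ its total measure. If $\delta_\omega(x)=\infty$, the integrands are interpreted as $0$. *)

theory Defs
  imports "HOL-Analysis.Analysis"
begin

text \<open>Surface measure on the unit sphere of a Euclidean space, defined by the
standard cone construction: \<sigma>(A) = d * |{t w : 0 < t < 1, w \<in> A}|,
i.e. d times the push-forward of Lebesgue measure on the punctured unit ball
under the radial projection x \<mapsto> x / |x|.  (This coincides with the
(d-1)-dimensional Hausdorff measure on the sphere.)\<close>
definition sphere_measure :: "'a::euclidean_space measure" where
  "sphere_measure =
     density
       (distr (restrict_space lborel (ball 0 1 - {0}))
              (restrict_space borel (sphere 0 1))
              (\<lambda>x. x /\<^sub>R norm x))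
       (\<lambda>_. ennreal (real DIM('a)))"

text \<open>Directional distance to the boundary: inf{|s| : x + s w \<notin> \<Omega>},
valued in the extended reals (= \<infinity> if the whole line lies in \<Omega>).\<close>
definition dir_dist :: "'a::euclidean_space set \<Rightarrow> 'a \<Rightarrow> 'a \<Rightarrow> ereal" where
  "dir_dist \<Omega> w x = Inf {ereal \<bar>s\<bar> | s. x + s *\<^sub>R w \<notin> \<Omega>}"

definition inv_dist_pow :: "'a::euclidean_space set \<Rightarrow> real \<Rightarrow> real \<Rightarrow> 'a \<Rightarrow> 'a \<Rightarrow> ennreal" where
  "inv_dist_pow \<Omega> \<alpha> l x w =
     (case dir_dist \<Omega> w x of ereal t \<Rightarrow> ennreal (1 / (t + l) powr \<alpha>) | _ \<Rightarrow> 0)"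

definition avg_inv_dist :: "'a::euclidean_space set \<Rightarrow> real \<Rightarrow> real \<Rightarrow> 'a \<Rightarrow> ennreal" where
  "avg_inv_dist \<Omega> \<alpha> l x =
     (\<integral>\<^sup>+ w. inv_dist_pow \<Omega> \<alpha> l x w \<partial>sphere_measure)
       / emeasure (sphere_measure :: 'a measure) (space (sphere_measure :: 'a measure))"

definition psi :: "'a::euclidean_space set \<Rightarrow> real \<Rightarrow> 'a \<Rightarrow> real" where
  "psi \<Omega> r x = measure lborel (\<Omega> \<inter> ball x r) / measure lborel (ball x r)"

end

theory Submission
  imports Defs
begin

lemma space_sphere_measure: "space (sphere_measure :: 'a::euclidean_space measure) = sphere 0 1"
  by (simp add: sphere_measure_def)

lemma sets_sphere_measure: "sets (sphere_measure :: 'a::euclidean_space measure) = sets (restrict_space borel (sphere 0 1))"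
  by (simp add: sphere_measure_def)

lemma proj_meas: "(\<lambda>x::'a::euclidean_space. x /\<^sub>R norm x) \<in> measurable (restrict_space lborel (ball 0 1 - {0})) (restrict_space borel (sphere 0 1))"
  apply (rule measurable_restrict_space3)
   apply measurable
  done

lemma B0_sets[measurable]: "ball (0::'a::euclidean_space) 1 - {0} \<in> sets borel"
  by auto

lemma sphere_nn_integral:
  fixes g :: "'a::euclidean_space \<Rightarrow> ennreal"
  assumes g: "g \<in> borel_measurable borel"
  shows "(\<integral>\<^sup>+ w. g w \<partial>(sphere_measure::'a measure)) =
     ennreal (real DIM('a)) * (\<integral>\<^sup>+ y. g (y /\<^sub>R norm y) * indicator (ball 0 1 - {0}) y \<partial>lborel)"
proof -
  have gm: "g \<in> borel_measurable (restrict_space borel (sphere 0 1))"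
    using g by (rule measurable_restrict_space1)
  have "(\<integral>\<^sup>+ w. g w \<partial>(sphere_measure::'a measure)) =
     (\<integral>\<^sup>+ w. ennreal (real DIM('a)) * g w \<partial>(distr (restrict_space lborel (ball 0 1 - {0}))
              (restrict_space borel (sphere 0 1)) (\<lambda>x::'a. x /\<^sub>R norm x)))"
    unfolding sphere_measure_def
    by (rule nn_integral_density) (use gm in auto)
  also have "\<dots> = (\<integral>\<^sup>+ y. ennreal (real DIM('a)) * g (y /\<^sub>R norm y) \<partial>restrict_space lborel (ball 0 1 - {0}))"
    by (rule nn_integral_distr[OF proj_meas]) (use gm in auto)
  also have "\<dots> = (\<integral>\<^sup>+ y. ennreal (real DIM('a)) * g (y /\<^sub>R norm y) * indicator (ball 0 1 - {0}) y \<partial>lborel)"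
    by (rule nn_integral_restrict_space) auto
  also have "\<dots> = ennreal (real DIM('a)) * (\<integral>\<^sup>+ y. g (y /\<^sub>R norm y) * indicator (ball 0 1 - {0}) y \<partial>lborel)"
  proof -
    have "(\<lambda>y. g (y /\<^sub>R norm y) * indicator (ball 0 1 - {0}) y) \<in> borel_measurable borel"
      using g by measurable
    then show ?thesis by (subst nn_integral_cmult[symmetric]) (auto simp: mult.assoc)
  qed
  finally show ?thesis .
qed

lemma sphere_total:
  "emeasure (sphere_measure::'a::euclidean_space measure) (space sphere_measure) =
     ennreal (real DIM('a)) * emeasure lborel (ball (0::'a) 1)"
proof -
  have "emeasure (sphere_measure::'a measure) (space sphere_measure) = (\<integral>\<^sup>+ w. 1 \<partial>(sphere_measure::'a measure))"
    by simp
  also have "\<dots> = ennreal (real DIM('a)) * (\<integral>\<^sup>+ y. indicator (ball 0 1 - {0}) (y::'a) \<partial>lborel)"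
    by (subst sphere_nn_integral) auto
  also have "\<dots> = ennreal (real DIM('a)) * emeasure lborel (ball (0::'a) 1 - {0})"
    using B0_sets[where 'a='a] by (subst nn_integral_indicator) auto
  also have "\<dots> = ennreal (real DIM('a)) * emeasure lborel (ball (0::'a) 1)"
    by (subst emeasure_Diff_null_set) auto
  finally show ?thesis .
qed

lemma dd_nonneg: "0 \<le> dir_dist \<Omega> w x"
  unfolding dir_dist_def by (rule Inf_greatest) auto

lemma dd_in: "ereal \<bar>s\<bar> < dir_dist \<Omega> w x \<Longrightarrow> x + s *\<^sub>R w \<in> \<Omega>"
  unfolding dir_dist_def
  by (metis (mono_tags, lifting) Inf_lower leD mem_Collect_eq)

lemma dd_pos:
  assumes "ball x e \<subseteq> \<Omega>" "e > 0" "norm w = 1"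
  shows "ereal e \<le> dir_dist \<Omega> w x"
  unfolding dir_dist_def
proof (rule Inf_greatest, clarify)
  fix s assume "x + s *\<^sub>R w \<notin> \<Omega>"
  then have "x + s *\<^sub>R w \<notin> ball x e" using assms by auto
  then have "e \<le> \<bar>s\<bar>" using assms(3) by (simp add: dist_norm)
  then show "ereal e \<le> ereal \<bar>s\<bar>" by simp
qed

lemma dd_ge:
  assumes "\<And>s. \<bar>s\<bar> < t \<Longrightarrow> x + s *\<^sub>R w \<in> \<Omega>"
  shows "ereal t \<le> dir_dist \<Omega> w x"
  unfolding dir_dist_def
proof (rule Inf_greatest, clarify)
  fix s assume "x + s *\<^sub>R w \<notin> \<Omega>"
  then have "\<not> \<bar>s\<bar> < t" using assms by blast
  then show "ereal t \<le> ereal \<bar>s\<bar>" by simp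
qed

lemma dd_open:
  fixes \<Omega> :: "'a::euclidean_space set"
  assumes "open \<Omega>"
  shows "open {w. ereal t < dir_dist \<Omega> w x}"
proof (cases "t < 0")
  case True
  then have "{w. ereal t < dir_dist \<Omega> w x} = UNIV"
    using dd_nonneg[of \<Omega> _ x] by (auto intro: less_le_trans[of _ 0])
  then show ?thesis by simp
next
  case False
  show ?thesis
  proof (rule openI)
    fix w0 assume "w0 \<in> {w. ereal t < dir_dist \<Omega> w x}"
    then have w0: "ereal t < dir_dist \<Omega> w0 x" by simp
    obtain t' where t': "ereal t < ereal t'" "ereal t' < dir_dist \<Omega> w0 x"
      using ereal_dense2[OF w0] by blast
    then have tt': "t < t'" "0 \<le> t'" using False by auto
    define K where "K = (\<lambda>s. x + s *\<^sub>R w0) ` {-t'..t'}"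
    have "compact K" unfolding K_def
      by (intro compact_continuous_image continuous_intros) auto
    moreover have "K \<subseteq> \<Omega>"
    proof
      fix k assume "k \<in> K"
      then obtain s where s: "s \<in> {-t'..t'}" "k = x + s *\<^sub>R w0" unfolding K_def by auto
      have "ereal \<bar>s\<bar> < dir_dist \<Omega> w0 x"
        using s(1) t'(2) by (intro le_less_trans[OF _ t'(2)]) auto
      then show "k \<in> \<Omega>" using dd_in s(2) by blast
    qed
    ultimately obtain \<epsilon> where eps: "\<epsilon> > 0" "(\<Union>k\<in>K. ball k \<epsilon>) \<subseteq> \<Omega>"
      using compact_subset_open_imp_ball_epsilon_subset assms by metis
    define \<rho> where "\<rho> = \<epsilon> / (t' + 1)"
    have rho: "\<rho> > 0" using eps tt' by (simp add: \<rho>_def)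
    have "ball w0 \<rho> \<subseteq> {w. ereal t < dir_dist \<Omega> w x}"
    proof
      fix w assume w: "w \<in> ball w0 \<rho>"
      have "ereal t' \<le> dir_dist \<Omega> w x"
      proof (rule dd_ge)
        fix s :: real assume s: "\<bar>s\<bar> < t'"
        have k: "x + s *\<^sub>R w0 \<in> K" unfolding K_def using s by (intro image_eqI[where x=s]) auto
        have "dist (x + s *\<^sub>R w0) (x + s *\<^sub>R w) = \<bar>s\<bar> * dist w0 w"
          by (simp add: dist_norm scaleR_diff_right[symmetric])
        also have "\<dots> \<le> t' * \<rho>"
          using s w by (intro mult_mono) (auto simp: dist_commute)
        also have "\<dots> < \<epsilon>" using eps tt' by (simp add: \<rho>_def field_simps)
        finally have "x + s *\<^sub>R w \<in> ball (x + s *\<^sub>R w0) \<epsilon>" by simp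
        then show "x + s *\<^sub>R w \<in> \<Omega>" using eps k by blast
      qed
      then show "w \<in> {w. ereal t < dir_dist \<Omega> w x}"
        using less_le_trans[OF t'(1)] by simp
    qed
    then show "\<exists>e>0. ball w0 e \<subseteq> {w. ereal t < dir_dist \<Omega> w x}" using rho by blast
  qed
qed

definition mdist :: "'a::euclidean_space set \<Rightarrow> real \<Rightarrow> 'a \<Rightarrow> 'a \<Rightarrow> real" where
  "mdist \<Omega> r x w = real_of_ereal (min (dir_dist \<Omega> w x) (ereal r))"

lemma mdist_eq:
  assumes "r \<ge> 0"
  shows "ereal (mdist \<Omega> r x w) = min (dir_dist \<Omega> w x) (ereal r)"
proof (cases "dir_dist \<Omega> w x")
  case (real a)
  then show ?thesis by (simp add: mdist_def min_def)
next
  case PInf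
  then show ?thesis by (simp add: mdist_def min_def)
next
  case MInf
  then show ?thesis using dd_nonneg[of \<Omega> w x] by simp
qed

lemma mdist_less_iff:
  assumes "r > 0"
  shows "(t < mdist \<Omega> r x w) \<longleftrightarrow> (t < r \<and> ereal t < dir_dist \<Omega> w x)"
proof -
  have e: "ereal (mdist \<Omega> r x w) = min (dir_dist \<Omega> w x) (ereal r)" using assms by (intro mdist_eq) simp
  have "(t < mdist \<Omega> r x w) \<longleftrightarrow> ereal t < ereal (mdist \<Omega> r x w)" by simp
  also have "\<dots> \<longleftrightarrow> ereal t < min (dir_dist \<Omega> w x) (ereal r)" by (simp only: e)
  also have "\<dots> \<longleftrightarrow> (t < r \<and> ereal t < dir_dist \<Omega> w x)" by auto
  finally show ?thesis .
qed

lemma mdist_meas: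
  fixes \<Omega> :: "'a::euclidean_space set"
  assumes "open \<Omega>" "r > 0"
  shows "mdist \<Omega> r x \<in> borel_measurable borel"
proof (rule borel_measurableI_greater)
  fix t
  have "{w. t < mdist \<Omega> r x w} = (if t < r then {w. ereal t < dir_dist \<Omega> w x} else {})"
    using mdist_less_iff[OF assms(2)] by auto
  then have "open {w. t < mdist \<Omega> r x w}" using dd_open[OF assms(1)] by simp
  then show "{w \<in> space borel. t < mdist \<Omega> r x w} \<in> sets borel" by simp
qed

lemma tangent_powr:
  fixes s p \<beta> :: real
  assumes "s > 0" "p > 0" "\<beta> > 0"
  shows "p powr (-\<beta>) - \<beta> * p powr (-\<beta>-1) * (s - p) \<le> s powr (-\<beta>)"
proof -
  define z where "z = s / p"
  have z: "z > 0" using assms by (simp add: z_def)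
  have "1 - \<beta> * ln z \<le> exp (- \<beta> * ln z)" using exp_ge_add_one_self[of "-\<beta> * ln z"] by simp
  moreover have "ln z \<le> z - 1" using ln_le_minus_one[OF z] .
  ultimately have "1 - \<beta> * (z - 1) \<le> z powr (-\<beta>)"
    using assms(3) z by (simp add: powr_def) (smt (verit) mult_left_mono)
  then have "p powr (-\<beta>) * (1 - \<beta> * (z - 1)) \<le> p powr (-\<beta>) * z powr (-\<beta>)"
    by (intro mult_left_mono) auto
  also have "p powr (-\<beta>) * z powr (-\<beta>) = s powr (-\<beta>)"
    using assms z by (simp add: z_def powr_mult[symmetric])
  also have "p powr (-\<beta>) * (1 - \<beta> * (z - 1)) = p powr (-\<beta>) - \<beta> * p powr (-\<beta>-1) * (s - p)"
    using assms by (simp add: z_def powr_diff field_simps powr_minus)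
  finally show ?thesis .
qed

lemma amgm_bound:
  fixes t \<alpha> :: real and d :: nat
  assumes "0 < t" "t \<le> 1" "\<alpha> > 0" "d > 0"
  shows "((real d + \<alpha>) / \<alpha>) powr (\<alpha> / real d) * ((real d + \<alpha>) / real d) * (1 - t ^ d) * t powr \<alpha> \<le> 1"
proof (cases "t = 1")
  case True then show ?thesis by simp
next
  case False
  then have t1: "t < 1" using assms by simp
  have td: "0 < t ^ d" "t ^ d < 1" using assms t1 power_strict_mono[of t 1 d] by auto
  define a where "a = t ^ d * ((real d + \<alpha>) / \<alpha>)"
  define b where "b = (1 - t ^ d) * ((real d + \<alpha>) / real d)"
  define p where "p = \<alpha> / (real d + \<alpha>)"
  define q where "q = real d / (real d + \<alpha>)"
  have a: "a > 0" and b: "b > 0" using td assms by (auto simp: a_def b_def)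
  have dpos: "real d + \<alpha> > 0" using assms by simp
  have pq: "p + q = 1" using dpos unfolding p_def q_def by (simp add: add_divide_distrib[symmetric])
  have "a powr p * b powr q \<le> p * a + q * b"
    using assms a b pq dpos by (intro Youngs_inequality_0) (auto simp: p_def q_def)
  also have "p * a = t ^ d" using dpos assms by (simp add: p_def a_def)
  also have "q * b = 1 - t ^ d" using dpos assms by (simp add: q_def b_def)
  also have "t ^ d + (1 - t ^ d) = 1" by simp
  finally have h: "a powr p * b powr q \<le> 1" .
  have "(a powr p * b powr q) powr ((real d + \<alpha>) / real d) \<le> 1"
    using h a b assms by (metis powr_mono2 powr_one_eq_one less_eq_real_def divide_nonneg_nonneg of_nat_0_le_iff add_nonneg_nonneg order_less_imp_le powr_ge_zero mult_nonneg_nonneg)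
  also have "(a powr p * b powr q) powr ((real d + \<alpha>) / real d) = a powr (\<alpha> / real d) * b"
    using a b assms by (simp add: powr_mult powr_powr p_def q_def)
  also have "a powr (\<alpha> / real d) = (t ^ d) powr (\<alpha> / real d) * ((real d + \<alpha>) / \<alpha>) powr (\<alpha> / real d)"
    using td assms unfolding a_def by (subst powr_mult) auto
  also have "(t ^ d) powr (\<alpha> / real d) = t powr \<alpha>"
    using assms by (simp add: powr_realpow[symmetric] powr_powr)
  finally show ?thesis by (simp add: b_def mult_ac)
qed

lemma pow_diff_le:
  fixes a b :: real
  assumes "0 \<le> a" "a \<le> b" "b \<le> 1"
  shows "b ^ n - a ^ n \<le> real n * (b - a)"
proof (induction n)
  case 0 then show ?case by simp
next
  case (Suc n)
  have "b ^ Suc n - a ^ Suc n = b * (b ^ n - a ^ n) + a ^ n * (b - a)" by (simp add: algebra_simps)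
  also have "\<dots> \<le> 1 * (real n * (b - a)) + 1 * (b - a)"
  proof (intro add_mono mult_mono)
    show "b ^ n - a ^ n \<le> real n * (b - a)" by (rule Suc.IH)
    show "a ^ n \<le> 1" using assms by (simp add: power_le_one)
    show "0 \<le> b ^ n - a ^ n" using assms by (simp add: power_mono)
  qed (use assms in auto)
  finally show ?case by (simp add: algebra_simps)
qed

definition Bz :: "'a::euclidean_space set" where "Bz = ball 0 1 - {0}"

lemma Bz_sets[measurable]: "Bz \<in> sets borel" unfolding Bz_def by auto

lemma Bz_fin: "emeasure lborel (Bz::'a::euclidean_space set) < \<infinity>"
  unfolding Bz_def by (intro emeasure_bounded_finite) auto

lemma Bz_measure: "measure lborel (Bz::'a::euclidean_space set) = measure lborel (ball (0::'a) 1)"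
  unfolding Bz_def by (rule measure_Diff_null_set) auto

lemma intI:
  fixes f :: "'a::euclidean_space \<Rightarrow> real"
  assumes "f \<in> borel_measurable borel" "\<And>y. y \<in> Bz \<Longrightarrow> \<bar>f y\<bar> \<le> M"
  shows "integrable lborel (\<lambda>y. indicator Bz y * f y)"
  using integrableI_bounded_set_indicator[of Bz lborel f M] assms Bz_fin by simp

lemma sc_inv:
  fixes y :: "'a::euclidean_space"
  assumes "c > 0"
  shows "(c *\<^sub>R y) /\<^sub>R norm (c *\<^sub>R y) = y /\<^sub>R norm y"
  using assms by (simp add: divide_inverse_commute)


definition uu :: "'a::euclidean_space set \<Rightarrow> real \<Rightarrow> 'a \<Rightarrow> 'a \<Rightarrow> real" where
  "uu \<Omega> r x w = mdist \<Omega> r x w / r"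

lemma uu_meas[measurable]:
  fixes \<Omega> :: "'a::euclidean_space set"
  assumes "open \<Omega>" "r > 0"
  shows "uu \<Omega> r x \<in> borel_measurable borel"
  unfolding uu_def[abs_def] using mdist_meas[OF assms] by (intro borel_measurable_divide) auto

lemma uu_le1:
  assumes "r > 0"
  shows "uu \<Omega> r x w \<le> 1"
proof -
  have "ereal (mdist \<Omega> r x w) \<le> ereal r" using mdist_eq[of r \<Omega> x w] assms by simp
  then show ?thesis using assms by (simp add: uu_def)
qed

lemma uu_pos:
  assumes "open \<Omega>" "x \<in> \<Omega>" "r > 0" "norm w = 1"
  shows "uu \<Omega> r x w > 0"
proof -
  obtain e where e: "e > 0" "ball x e \<subseteq> \<Omega>" using assms(1,2) by (auto simp: open_contains_ball)
  have h1: "ereal e \<le> dir_dist \<Omega> w x" using dd_pos[OF e(2) e(1) assms(4)] .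
  have h2: "ereal (mdist \<Omega> r x w) = min (dir_dist \<Omega> w x) (ereal r)" using mdist_eq[of r \<Omega> x w] assms(3) by simp
  have "0 < mdist \<Omega> r x w"
  proof -
    have "ereal 0 < ereal e" using e(1) by simp
    then have "ereal 0 < dir_dist \<Omega> w x" using h1 by (rule less_le_trans)
    moreover have "ereal 0 < ereal r" using assms(3) by simp
    ultimately have "ereal 0 < min (dir_dist \<Omega> w x) (ereal r)"
      unfolding min_less_iff_conj by blast
    then have "ereal 0 < ereal (mdist \<Omega> r x w)" using h2 by simp
    then show ?thesis by simp
  qed
  then show ?thesis unfolding uu_def using assms(3) by (rule divide_pos_pos)
qed

lemma uu_in:
  assumes "r > 0" "norm w = 1" "0 \<le> \<rho>" "\<rho> < uu \<Omega> r x w"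
  shows "x + (r * \<rho>) *\<^sub>R w \<in> \<Omega>"
proof (rule dd_in)
  have "\<rho> * r < mdist \<Omega> r x w" using assms(4) unfolding uu_def using pos_less_divide_eq[OF assms(1)] by blast
  then have "ereal (r * \<rho>) < ereal (mdist \<Omega> r x w)" by (simp add: mult.commute)
  also have "\<dots> = min (dir_dist \<Omega> w x) (ereal r)" using mdist_eq[of r \<Omega> x w] assms(1) by simp
  finally have "ereal (r * \<rho>) < dir_dist \<Omega> w x" unfolding min_less_iff_conj by blast
  then show "ereal \<bar>r * \<rho>\<bar> < dir_dist \<Omega> w x" using assms by simp
qed

lemma key_disc:
  fixes \<Omega> :: "'a::euclidean_space set"
  assumes om: "open \<Omega>" and x: "x \<in> \<Omega>" and r: "r > 0" and n: "n > 0"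
  defines "q \<equiv> \<lambda>y. \<lceil>real n * uu \<Omega> r x (y /\<^sub>R norm y)\<rceil> - 1"
  defines "G \<equiv> {y \<in> ball 0 1. x + r *\<^sub>R y \<in> \<Omega>}"
  shows "(\<integral> y. indicator Bz y * (real_of_int (q y) / real n) ^ DIM('a) \<partial>lborel) \<le> measure lborel G"
proof -
  note uum[measurable] = uu_meas[OF om r, of x]
  have qm[measurable]: "q \<in> measurable borel (count_space UNIV)"
    unfolding q_def by measurable
  have "G = ball 0 1 \<inter> (\<lambda>y. x + r *\<^sub>R y) -` \<Omega>" unfolding G_def by auto
  moreover have "open (ball 0 1 \<inter> (\<lambda>y. x + r *\<^sub>R y) -` \<Omega>)"
    using om by (intro open_Int open_ball open_vimage continuous_intros) auto
  ultimately have Gs[measurable]: "G \<in> sets borel" by simp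
  have Gfin: "emeasure lborel G < \<infinity>" unfolding G_def
    by (intro emeasure_bounded_finite) (auto intro: bounded_subset[of "ball 0 1"])
  define A where "A = (\<lambda>k::nat. {y \<in> Bz. q y = int k})"
  define S where "S = (\<lambda>k::nat. {y \<in> Bz. norm y < real k / real n \<and> q y = int k})"
  have As[measurable]: "A k \<in> sets borel" for k unfolding A_def by measurable
  have Ss[measurable]: "S k \<in> sets borel" for k unfolding S_def by measurable
  have Afin: "emeasure lborel (A k) < \<infinity>" for k
    using Bz_fin by (rule le_less_trans[rotated]) (auto simp: A_def intro!: emeasure_mono)
  have Sfin: "emeasure lborel (S k) < \<infinity>" for k
    using Bz_fin by (rule le_less_trans[rotated]) (auto simp: S_def intro!: emeasure_mono)
  have qrange: "0 \<le> q y \<and> q y < int n" if "y \<in> Bz" for y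
  proof -
    have nw: "norm (y /\<^sub>R norm y) = 1" using that by (auto simp: Bz_def)
    have "0 < uu \<Omega> r x (y /\<^sub>R norm y)" "uu \<Omega> r x (y /\<^sub>R norm y) \<le> 1"
      using uu_pos[OF om x r nw] uu_le1[OF r] by auto
    then have "0 < real n * uu \<Omega> r x (y /\<^sub>R norm y)" "real n * uu \<Omega> r x (y /\<^sub>R norm y) \<le> real n"
      using n by (auto simp: mult_le_cancel_left1)
    then have "0 < \<lceil>real n * uu \<Omega> r x (y /\<^sub>R norm y)\<rceil>" "\<lceil>real n * uu \<Omega> r x (y /\<^sub>R norm y)\<rceil> \<le> int n"
      by (simp_all add: ceiling_le)
    then show ?thesis unfolding q_def by linarith
  qed
  have pw: "indicator Bz y * (real_of_int (q y) / real n) ^ DIM('a) =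
      (\<Sum>k<n. (real k / real n) ^ DIM('a) * indicator (A k) y)" for y
  proof (cases "y \<in> Bz")
    case True
    define k0 where "k0 = nat (q y)"
    have k0: "k0 < n" "int k0 = q y" using qrange[OF True] by (auto simp: k0_def)
    have "(\<Sum>k<n. (real k / real n) ^ DIM('a) * indicator (A k) y) =
        (\<Sum>k<n. if k = k0 then (real k / real n) ^ DIM('a) else 0)"
      using True k0 by (intro sum.cong) (auto simp: A_def indicator_def)
    also have "\<dots> = (real k0 / real n) ^ DIM('a)" using k0 by simp
    finally have e1: "(\<Sum>k<n. (real k / real n) ^ DIM('a) * indicator (A k) y) = (real k0 / real n) ^ DIM('a)" .
    have e2: "real_of_int (q y) = real k0" using k0(2) by (metis of_int_of_nat_eq)
    show ?thesis using True by (simp only: e1 e2 indicator_simps mult_1)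
  next
    case False
    then show ?thesis by (auto simp: A_def indicator_def)
  qed
  have "(\<integral> y. indicator Bz y * (real_of_int (q y) / real n) ^ DIM('a) \<partial>lborel) =
      (\<integral> y. (\<Sum>k<n. (real k / real n) ^ DIM('a) * indicator (A k) y) \<partial>lborel)"
    by (simp only: pw)
  also have "\<dots> = (\<Sum>k<n. (\<integral> y. (real k / real n) ^ DIM('a) * indicator (A k) y \<partial>lborel))"
    by (rule Bochner_Integration.integral_sum) (use Afin in auto)
  also have "\<dots> = (\<Sum>k<n. (real k / real n) ^ DIM('a) * measure lborel (A k))"
    by (intro sum.cong refl) (simp only: integral_mult_right_zero Bochner_Integration.integral_indicator space_lborel space_borel Int_UNIV_right)
  also have "\<dots> = (\<Sum>k\<in>{1..<n}. measure lborel (S k))"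
  proof -
    have "(\<Sum>k<n. (real k / real n) ^ DIM('a) * measure lborel (A k)) =
        (\<Sum>k<n. measure lborel (S k))"
    proof (intro sum.cong refl)
      fix k assume k: "k \<in> {..<n}"
      show "(real k / real n) ^ DIM('a) * measure lborel (A k) = measure lborel (S k)"
      proof (cases "k = 0")
        case True
        have "S k = {}" using True by (auto simp: S_def)
        then show ?thesis using True by simp
      next
        case False
        define c where "c = real k / real n"
        have c: "c > 0" using False n by (simp add: c_def)
        have img: "(\<lambda>y. c *\<^sub>R y + 0) ` A k = S k"
        proof (intro equalityI subsetI)
          fix z assume "z \<in> (\<lambda>y. c *\<^sub>R y + 0) ` A k"
          then obtain y where y: "y \<in> A k" "z = c *\<^sub>R y" by auto
          have "c \<le> 1" using k n by (simp add: c_def)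
          then have "norm z < c" "z \<noteq> 0" using y c by (auto simp: A_def Bz_def)
          moreover have "norm z < 1" using \<open>norm z < c\<close> \<open>c \<le> 1\<close> by simp
          moreover have "q z = q y" unfolding q_def y(2) by (simp only: sc_inv[OF c])
          ultimately show "z \<in> S k" using y by (auto simp: S_def A_def Bz_def c_def)
        next
          fix z assume z: "z \<in> S k"
          define y where "y = (1 / c) *\<^sub>R z"
          have zy: "z = c *\<^sub>R y" using c by (simp add: y_def)
          have nzc: "norm z < c" using z by (simp add: S_def c_def)
          have "norm y = norm z / c" using c by (simp add: y_def)
          then have "norm y < 1" using nzc c by simp
          moreover have "y \<noteq> 0" using z c by (auto simp: y_def S_def Bz_def)
          moreover have "q z = q y" unfolding q_def zy by (simp only: sc_inv[OF c])
          ultimately have "y \<in> A k" using z by (auto simp: A_def S_def Bz_def)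
          then show "z \<in> (\<lambda>y. c *\<^sub>R y + 0) ` A k" using zy by auto
        qed
        have "measure lebesgue ((\<lambda>y. c *\<^sub>R y + 0) ` A k) = \<bar>c\<bar> ^ DIM('a) * measure lebesgue (A k)"
          by (rule measure_lebesgue_affine)
        then have "measure lebesgue (S k) = c ^ DIM('a) * measure lebesgue (A k)"
          using c img by simp
        then show ?thesis by (simp add: c_def)
      qed
    qed
    also have "\<dots> = (\<Sum>k\<in>{1..<n}. measure lborel (S k))"
    proof -
      have "{..<n} = insert 0 {1..<n}" using n by auto
      moreover have "S 0 = {}" by (auto simp: S_def)
      ultimately show ?thesis by simp
    qed
    finally show ?thesis .
  qed
  also have "\<dots> = measure lborel (\<Union>k\<in>{1..<n}. S k)"
    using Sfin by (intro measure_finite_Union[symmetric]) (auto simp: disjoint_family_on_def S_def less_top)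
  also have "\<dots> \<le> measure lborel G"
  proof (rule measure_mono_fmeasurable)
    show "G \<in> fmeasurable lborel" using Gfin by (auto simp: fmeasurable_def)
    show "(\<Union>k\<in>{1..<n}. S k) \<in> sets lborel" by measurable
    show "(\<Union>k\<in>{1..<n}. S k) \<subseteq> G"
    proof clarify
      fix k z assume k: "k \<in> {1..<n}" and z: "z \<in> S k"
      have nz: "norm z < real k / real n" "q z = int k" "z \<in> Bz" using z by (auto simp: S_def)
      have z0: "z \<noteq> 0" "norm z < 1" using nz(3) by (auto simp: Bz_def)
      have "real k < real n * uu \<Omega> r x (z /\<^sub>R norm z)"
        using nz(2) unfolding q_def by linarith
      moreover have "real n * norm z < real k" using nz(1) n by (simp add: field_simps)
      ultimately have "real n * norm z < real n * uu \<Omega> r x (z /\<^sub>R norm z)" by linarith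
      then have lt: "norm z < uu \<Omega> r x (z /\<^sub>R norm z)"
        using n by (simp add: mult_less_cancel_left_pos)
      have "x + (r * norm z) *\<^sub>R (z /\<^sub>R norm z) \<in> \<Omega>"
        using z0 by (intro uu_in[OF r _ _ lt]) auto
      moreover have "(r * norm z) *\<^sub>R (z /\<^sub>R norm z) = r *\<^sub>R z" using z0 by simp
      ultimately have "x + r *\<^sub>R z \<in> \<Omega>" by metis
      then show "z \<in> G" using z0 by (simp add: G_def)
    qed
  qed
  finally show ?thesis .
qed

lemma le_of_eps:
  fixes X Y c :: real
  assumes "\<And>n::nat. n > 0 \<Longrightarrow> X \<le> Y + c / real n"
  shows "X \<le> Y"
proof (rule ccontr)
  assume "\<not> X \<le> Y"
  then have pos: "X - Y > 0" by simp
  obtain n :: nat where n: "n > \<bar>c\<bar> / (X - Y)" using reals_Archimedean2 by blast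
  have n0: "n > 0" using n pos by (metis abs_ge_zero divide_nonneg_pos of_nat_0_less_iff order_le_less_trans)
  have "\<bar>c\<bar> < real n * (X - Y)" using n pos by (simp add: pos_divide_less_eq mult.commute)
  then have "c / real n < X - Y" using n0 by (simp add: divide_less_eq mult.commute)
  then show False using assms[OF n0] by linarith
qed

lemma key_lim:
  fixes \<Omega> :: "'a::euclidean_space set"
  assumes om: "open \<Omega>" and x: "x \<in> \<Omega>" and r: "r > 0"
  shows "(\<integral> y. indicator Bz y * (uu \<Omega> r x (y /\<^sub>R norm y)) ^ DIM('a) \<partial>lborel)
           \<le> measure lborel {y \<in> ball 0 1. x + r *\<^sub>R y \<in> \<Omega>}"
proof (rule le_of_eps)
  fix n :: nat assume n: "n > 0"
  note uum[measurable] = uu_meas[OF om r, of x]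
  define q where "q = (\<lambda>y. \<lceil>real n * uu \<Omega> r x (y /\<^sub>R norm y)\<rceil> - 1)"
  have qm[measurable]: "q \<in> measurable borel (count_space UNIV)"
    unfolding q_def by measurable
  have U: "0 < uu \<Omega> r x (y /\<^sub>R norm y)" "uu \<Omega> r x (y /\<^sub>R norm y) \<le> 1" if "y \<in> Bz" for y
  proof -
    have nw: "norm (y /\<^sub>R norm y) = 1" using that by (auto simp: Bz_def)
    show "0 < uu \<Omega> r x (y /\<^sub>R norm y)" "uu \<Omega> r x (y /\<^sub>R norm y) \<le> 1"
      using uu_pos[OF om x r nw] uu_le1[OF r] by auto
  qed
  have pw: "indicator Bz y * (uu \<Omega> r x (y /\<^sub>R norm y)) ^ DIM('a) \<le>
      indicator Bz y * (real_of_int (q y) / real n) ^ DIM('a) + real DIM('a) / real n * indicator (Bz::'a set) y" for y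
  proof (cases "y \<in> Bz")
    case True
    define u where "u = uu \<Omega> r x (y /\<^sub>R norm y)"
    have u: "0 < u" "u \<le> 1" using U[OF True] by (auto simp: u_def)
    have qy: "q y = \<lceil>real n * u\<rceil> - 1" by (simp add: q_def u_def)
    have c1: "real n * u \<le> real_of_int \<lceil>real n * u\<rceil>" by (rule le_of_int_ceiling)
    have c2: "real_of_int \<lceil>real n * u\<rceil> < real n * u + 1" using ceiling_correct[of "real n * u"] by linarith
    have "0 < real n * u" using n u by simp
    then have c3: "0 < \<lceil>real n * u\<rceil>" by simp
    define a where "a = real_of_int (q y) / real n"
    have a0: "0 \<le> a" using c3 n by (simp add: a_def qy)
    have au: "a \<le> u" using c2 n by (simp add: a_def qy field_simps)
    have ua: "u - a \<le> 1 / real n" using c1 n by (simp add: a_def qy field_simps)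
    have "u ^ DIM('a) - a ^ DIM('a) \<le> real DIM('a) * (u - a)" by (rule pow_diff_le[OF a0 au u(2)])
    also have "\<dots> \<le> real DIM('a) * (1 / real n)" using ua by (intro mult_left_mono) auto
    finally have "u ^ DIM('a) \<le> a ^ DIM('a) + real DIM('a) / real n" by simp
    then show ?thesis using True by (simp add: u_def a_def)
  next
    case False
    then show ?thesis by simp
  qed
  have i1: "integrable lborel (\<lambda>y. indicator Bz y * (uu \<Omega> r x (y /\<^sub>R norm y)) ^ DIM('a))"
  proof (rule intI[where M=1])
    fix y :: 'a assume y: "y \<in> Bz"
    have "0 \<le> uu \<Omega> r x (y /\<^sub>R norm y)" "uu \<Omega> r x (y /\<^sub>R norm y) \<le> 1" using U[OF y] by auto
    then show "\<bar>uu \<Omega> r x (y /\<^sub>R norm y) ^ DIM('a)\<bar> \<le> 1" by (simp add: power_le_one)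
  qed measurable
  have i2: "integrable lborel (\<lambda>y. indicator Bz y * (real_of_int (q y) / real n) ^ DIM('a))"
  proof (rule intI[where M=1])
    show "(\<lambda>y. (real_of_int (q y) / real n) ^ DIM('a)) \<in> borel_measurable borel" by measurable
    fix y :: 'a assume y: "y \<in> Bz"
    define u where "u = uu \<Omega> r x (y /\<^sub>R norm y)"
    have u: "0 < u" "u \<le> 1" using U[OF y] by (auto simp: u_def)
    have qy: "q y = \<lceil>real n * u\<rceil> - 1" by (simp add: q_def u_def)
    have c2: "real_of_int \<lceil>real n * u\<rceil> < real n * u + 1" using ceiling_correct[of "real n * u"] by linarith
    have "0 < real n * u" using n u by simp
    then have c3: "0 < \<lceil>real n * u\<rceil>" by simp
    have "0 \<le> real_of_int (q y) / real n" using c3 n by (simp add: qy)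
    moreover have "real_of_int (q y) / real n \<le> 1"
    proof -
      have "real n * u \<le> real n * 1" using u by (intro mult_left_mono) auto
      then have "real_of_int (q y) \<le> real n" using c2 by (simp add: qy)
      then show ?thesis using n by simp
    qed
    ultimately show "\<bar>(real_of_int (q y) / real n) ^ DIM('a)\<bar> \<le> 1" by (simp add: power_le_one)
  qed
  have i3: "integrable lborel (\<lambda>y. real DIM('a) / real n * indicator (Bz::'a set) y)"
    using Bz_fin by (intro integrable_mult_right integrable_real_indicator) auto
  have "(\<integral> y. indicator Bz y * (uu \<Omega> r x (y /\<^sub>R norm y)) ^ DIM('a) \<partial>lborel) \<le>
      (\<integral> y. indicator Bz y * (real_of_int (q y) / real n) ^ DIM('a) + real DIM('a) / real n * indicator (Bz::'a set) y \<partial>lborel)"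
    by (rule integral_mono[OF i1 Bochner_Integration.integrable_add[OF i2 i3] pw])
  also have "\<dots> = (\<integral> y. indicator Bz y * (real_of_int (q y) / real n) ^ DIM('a) \<partial>lborel) +
      (\<integral> y. real DIM('a) / real n * indicator (Bz::'a set) y \<partial>lborel)"
    by (rule Bochner_Integration.integral_add[OF i2 i3])
  also have "(\<integral> y. real DIM('a) / real n * indicator (Bz::'a set) y \<partial>lborel) = real DIM('a) / real n * measure lborel (Bz::'a set)"
    by (simp only: integral_mult_right_zero Bochner_Integration.integral_indicator space_lborel space_borel Int_UNIV_right)
  also have "(\<integral> y. indicator Bz y * (real_of_int (q y) / real n) ^ DIM('a) \<partial>lborel) + real DIM('a) / real n * measure lborel (Bz::'a set) \<le> measure lborel {y \<in> ball 0 1. x + r *\<^sub>R y \<in> \<Omega>} + real DIM('a) / real n * measure lborel (Bz::'a set)"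
    using key_disc[OF om x r n] unfolding q_def by simp
  finally show "(\<integral> y. indicator Bz y * (uu \<Omega> r x (y /\<^sub>R norm y)) ^ DIM('a) \<partial>lborel)
      \<le> measure lborel {y \<in> ball 0 1. x + r *\<^sub>R y \<in> \<Omega>} + real DIM('a) * measure lborel (Bz::'a set) / real n"
    by simp
qed

lemma img_scale:
  fixes A :: "'a::euclidean_space set"
  assumes r: "r > 0"
  shows "(\<lambda>y. r *\<^sub>R y + x) ` {y \<in> ball 0 1. x + r *\<^sub>R y \<in> A} = A \<inter> ball x r"
proof (intro equalityI subsetI)
  fix z assume "z \<in> (\<lambda>y. r *\<^sub>R y + x) ` {y \<in> ball 0 1. x + r *\<^sub>R y \<in> A}"
  then obtain y where y: "norm y < 1" "x + r *\<^sub>R y \<in> A" "z = r *\<^sub>R y + x" by auto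
  have "dist x z = r * norm y" using y(3) r by (simp add: dist_norm)
  also have "\<dots> < r" using y(1) r by simp
  finally show "z \<in> A \<inter> ball x r" using y by (simp add: add.commute)
next
  fix z assume z: "z \<in> A \<inter> ball x r"
  define y where "y = (1 / r) *\<^sub>R (z - x)"
  have zy: "z = r *\<^sub>R y + x" using r by (simp add: y_def)
  have "norm y = dist x z / r" using r by (simp add: y_def dist_norm norm_minus_commute)
  then have "norm y < 1" using z r by simp
  moreover have "x + r *\<^sub>R y \<in> A" using z zy by (simp add: add.commute)
  ultimately show "z \<in> (\<lambda>y. r *\<^sub>R y + x) ` {y \<in> ball 0 1. x + r *\<^sub>R y \<in> A}"
    using zy by auto
qed

lemma open_G:
  fixes A :: "'a::euclidean_space set"
  assumes "open A"
  shows "open {y \<in> ball 0 1. x + r *\<^sub>R y \<in> A}"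
proof -
  have "{y \<in> ball 0 1. x + r *\<^sub>R y \<in> A} = ball 0 1 \<inter> (\<lambda>y. x + r *\<^sub>R y) -` A" by auto
  moreover have "open (ball 0 1 \<inter> (\<lambda>y. x + r *\<^sub>R y) -` A)"
    using assms by (intro open_Int open_ball open_vimage continuous_intros) auto
  ultimately show ?thesis by simp
qed

lemma meas_scale:
  fixes A :: "'a::euclidean_space set"
  assumes r: "r > 0" and A: "open A"
  shows "measure lborel (A \<inter> ball x r) = r ^ DIM('a) * measure lborel {y \<in> ball 0 1. x + r *\<^sub>R y \<in> A}"
proof -
  have "measure lebesgue ((\<lambda>y. r *\<^sub>R y + x) ` {y \<in> ball 0 1. x + r *\<^sub>R y \<in> A}) =
      \<bar>r\<bar> ^ DIM('a) * measure lebesgue {y \<in> ball 0 1. x + r *\<^sub>R y \<in> A}"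
    by (rule measure_lebesgue_affine)
  then have "measure lebesgue (A \<inter> ball x r) = \<bar>r\<bar> ^ DIM('a) * measure lebesgue {y \<in> ball 0 1. x + r *\<^sub>R y \<in> A}"
    by (simp only: img_scale[OF r])
  then have "measure lebesgue (A \<inter> ball x r) = r ^ DIM('a) * measure lebesgue {y \<in> ball 0 1. x + r *\<^sub>R y \<in> A}"
    using r by (simp only: abs_of_pos)
  moreover have "{y \<in> ball 0 1. x + r *\<^sub>R y \<in> A} \<in> sets lborel"
    using open_G[OF A] by simp
  moreover have "A \<inter> ball x r \<in> sets lborel" using A by simp
  ultimately show ?thesis by simp
qed

lemma psi_eq:
  fixes \<Omega> :: "'a::euclidean_space set"
  assumes r: "r > 0" and om: "open \<Omega>"
  shows "psi \<Omega> r x = measure lborel {y \<in> ball 0 1. x + r *\<^sub>R y \<in> \<Omega>} / measure lborel (ball (0::'a) 1)"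
proof -
  have "measure lborel (UNIV \<inter> ball x r) = r ^ DIM('a) * measure lborel {y \<in> ball (0::'a) 1. x + r *\<^sub>R y \<in> UNIV}"
    by (rule meas_scale[OF r]) simp
  moreover have "{y \<in> ball (0::'a) 1. x + r *\<^sub>R y \<in> UNIV} = ball 0 1" by auto
  ultimately have b: "measure lborel (ball x r) = r ^ DIM('a) * measure lborel (ball (0::'a) 1)" by simp
  show ?thesis
    unfolding psi_def b meas_scale[OF r om] using r by simp
qed

lemma V_pos: "0 < measure lborel (ball (0::'a::euclidean_space) 1)"
  using content_ball_pos[of 1 "0::'a"] by simp

definition Iop :: "('a::euclidean_space \<Rightarrow> real) \<Rightarrow> real" where
  "Iop g = (\<integral> y. indicator (Bz::'a set) y * g (y /\<^sub>R norm y) \<partial>lborel)"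

lemma Bz_norm: "y \<in> Bz \<Longrightarrow> norm (y /\<^sub>R norm y) = 1"
  by (auto simp: Bz_def)

lemma Iop_int:
  fixes g :: "'a::euclidean_space \<Rightarrow> real"
  assumes [measurable]: "g \<in> borel_measurable borel" and b: "\<And>w. norm w = 1 \<Longrightarrow> \<bar>g w\<bar> \<le> M"
  shows "integrable lborel (\<lambda>y. indicator (Bz::'a set) y * g (y /\<^sub>R norm y))"
proof (rule intI[where M=M])
  fix y :: 'a assume y: "y \<in> Bz"
  show "\<bar>g (y /\<^sub>R norm y)\<bar> \<le> M" using b[OF Bz_norm[OF y]] .
qed measurable

lemma Iop_affine:
  fixes g :: "'a::euclidean_space \<Rightarrow> real"
  assumes [measurable]: "g \<in> borel_measurable borel" and b: "\<And>w. norm w = 1 \<Longrightarrow> \<bar>g w\<bar> \<le> M"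
  shows "Iop (\<lambda>w. A + B * g w) = A * measure lborel (ball (0::'a) 1) + B * Iop g"
proof -
  have i1: "integrable lborel (\<lambda>y. indicator (Bz::'a set) y * g (y /\<^sub>R norm y))"
    by (rule Iop_int[OF assms])
  have i0: "integrable lborel (\<lambda>y. A * indicator (Bz::'a set) y)"
    using Bz_fin by (intro integrable_mult_right integrable_real_indicator) auto
  have i2: "integrable lborel (\<lambda>y. B * (indicator (Bz::'a set) y * g (y /\<^sub>R norm y)))"
    using i1 by (rule integrable_mult_right)
  have "Iop (\<lambda>w. A + B * g w) = (\<integral> y. A * indicator (Bz::'a set) y + B * (indicator (Bz::'a set) y * g (y /\<^sub>R norm y)) \<partial>lborel)"
    unfolding Iop_def by (intro Bochner_Integration.integral_cong refl) (simp add: algebra_simps)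
  also have "\<dots> = (\<integral> y. A * indicator (Bz::'a set) y \<partial>lborel) + (\<integral> y. B * (indicator (Bz::'a set) y * g (y /\<^sub>R norm y)) \<partial>lborel)"
    by (rule Bochner_Integration.integral_add[OF i0 i2])
  also have "(\<integral> y. A * indicator (Bz::'a set) y \<partial>lborel) = A * measure lborel (Bz::'a set)"
    by (simp only: integral_mult_right_zero Bochner_Integration.integral_indicator space_lborel space_borel Int_UNIV_right)
  also have "(\<integral> y. B * (indicator (Bz::'a set) y * g (y /\<^sub>R norm y)) \<partial>lborel) = B * Iop g"
    unfolding Iop_def by (rule integral_mult_right_zero)
  finally show ?thesis by (simp add: Bz_measure)
qed

lemma LB:
  fixes g :: "'a::euclidean_space \<Rightarrow> real" and f :: "'a \<Rightarrow> ennreal"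
  assumes [measurable]: "g \<in> borel_measurable borel" and b: "\<And>w. norm w = 1 \<Longrightarrow> \<bar>g w\<bar> \<le> M"
    and le: "\<And>w. norm w = 1 \<Longrightarrow> ennreal (g w) \<le> f w"
  shows "ennreal (real DIM('a) * Iop g) \<le> (\<integral>\<^sup>+ w. f w \<partial>(sphere_measure::'a measure))"
proof -
  define h where "h = (\<lambda>w. max 0 (g w))"
  have hm[measurable]: "h \<in> borel_measurable borel" unfolding h_def by measurable
  have hb: "\<bar>h w\<bar> \<le> \<bar>M\<bar>" if "norm w = 1" for w using b[OF that] by (auto simp: h_def)
  have eh: "ennreal (h w) = ennreal (g w)" for w by (auto simp: h_def max_def ennreal_neg)
  have "(\<integral>\<^sup>+ w. ennreal (h w) \<partial>(sphere_measure::'a measure)) \<le> (\<integral>\<^sup>+ w. f w \<partial>(sphere_measure::'a measure))"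
    by (rule nn_integral_mono) (simp add: space_sphere_measure eh le)
  moreover have "(\<integral>\<^sup>+ w. ennreal (h w) \<partial>(sphere_measure::'a measure)) =
      ennreal (real DIM('a)) * (\<integral>\<^sup>+ y. ennreal (h (y /\<^sub>R norm y)) * indicator (ball 0 1 - {0}) y \<partial>lborel)"
    by (rule sphere_nn_integral) measurable
  moreover have "(\<integral>\<^sup>+ y. ennreal (h (y /\<^sub>R norm y)) * indicator (ball 0 1 - {0}) y \<partial>lborel) =
      (\<integral>\<^sup>+ y. ennreal (indicator (Bz::'a set) y * h (y /\<^sub>R norm y)) \<partial>lborel)"
    by (intro nn_integral_cong) (auto simp: Bz_def indicator_def)
  moreover have "(\<integral>\<^sup>+ y. ennreal (indicator (Bz::'a set) y * h (y /\<^sub>R norm y)) \<partial>lborel) = ennreal (Iop h)"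
    unfolding Iop_def
    by (rule nn_integral_eq_integral[OF Iop_int[OF hm hb]]) (auto simp: h_def)
  moreover have "Iop g \<le> Iop h"
    unfolding Iop_def
    by (intro integral_mono Iop_int[OF hm hb] Iop_int[OF _ b]) (auto simp: h_def indicator_def)
  ultimately have X: "ennreal (real DIM('a)) * ennreal (Iop h) \<le> (\<integral>\<^sup>+ w. f w \<partial>(sphere_measure::'a measure))"
    by simp
  have "ennreal (real DIM('a) * Iop g) \<le> ennreal (real DIM('a) * Iop h)"
    using \<open>Iop g \<le> Iop h\<close> by (intro ennreal_leI mult_left_mono) auto
  also have "\<dots> = ennreal (real DIM('a)) * ennreal (Iop h)"
    by (rule ennreal_mult) (auto simp: Iop_def h_def intro!: Bochner_Integration.integral_nonneg)
  finally show ?thesis using X by (rule order_trans)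
qed

lemma avg_bound:
  fixes g :: "'a::euclidean_space \<Rightarrow> real"
  assumes [measurable]: "g \<in> borel_measurable borel" and b: "\<And>w. norm w = 1 \<Longrightarrow> \<bar>g w\<bar> \<le> M"
    and le: "\<And>w. norm w = 1 \<Longrightarrow> ennreal (g w) \<le> inv_dist_pow \<Omega> \<alpha> l x w"
    and c: "c * measure lborel (ball (0::'a) 1) \<le> Iop g"
  shows "ennreal c \<le> avg_inv_dist \<Omega> \<alpha> l x"
proof (cases "c \<le> 0")
  case True
  then show ?thesis by (simp add: ennreal_neg)
next
  case False
  define V where "V = measure lborel (ball (0::'a) 1)"
  have V: "V > 0" using V_pos by (simp add: V_def)
  have d: "real DIM('a) > 0" by simp
  have tot: "emeasure (sphere_measure::'a measure) (space sphere_measure) = ennreal (real DIM('a) * V)"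
  proof -
    have "emeasure lborel (ball (0::'a) 1) < top" using emeasure_bounded_finite[of "ball (0::'a) 1"] by simp
    then have "emeasure lborel (ball (0::'a) 1) \<noteq> top" by simp
    then have "emeasure lborel (ball (0::'a) 1) = ennreal V" unfolding V_def by (rule emeasure_eq_ennreal_measure)
    then show ?thesis unfolding sphere_total using V by (simp add: ennreal_mult)
  qed
  have "ennreal (real DIM('a) * (c * V)) \<le> ennreal (real DIM('a) * Iop g)"
    using c d by (intro ennreal_leI mult_left_mono) (auto simp: V_def)
  also have "\<dots> \<le> (\<integral>\<^sup>+ w. inv_dist_pow \<Omega> \<alpha> l x w \<partial>(sphere_measure::'a measure))"
    by (rule LB[OF assms(1) b le])
  finally have h: "ennreal (c * (real DIM('a) * V)) \<le> (\<integral>\<^sup>+ w. inv_dist_pow \<Omega> \<alpha> l x w \<partial>(sphere_measure::'a measure))"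
    by (simp add: mult_ac)
  have "ennreal c = ennreal (c * (real DIM('a) * V)) / ennreal (real DIM('a) * V)"
    using V d False by (subst divide_ennreal) auto
  also have "\<dots> \<le> (\<integral>\<^sup>+ w. inv_dist_pow \<Omega> \<alpha> l x w \<partial>(sphere_measure::'a measure)) / ennreal (real DIM('a) * V)"
    by (rule divide_right_mono_ennreal[OF h])
  also have "\<dots> = avg_inv_dist \<Omega> \<alpha> l x"
    unfolding avg_inv_dist_def tot ..
  finally show ?thesis .
qed

lemma pw_gen:
  fixes \<Omega> :: "'a::euclidean_space set"
  assumes om: "open \<Omega>" and x: "x \<in> \<Omega>" and r: "r > 0" and w: "norm w = 1"
    and h1: "uu \<Omega> r x w = 1 \<Longrightarrow> g \<le> 0"
    and h2: "\<And>a. 0 < a \<Longrightarrow> a < r \<Longrightarrow> uu \<Omega> r x w = a / r \<Longrightarrow> g \<le> 1 / (a + l) powr \<alpha>"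
  shows "ennreal g \<le> inv_dist_pow \<Omega> \<alpha> l x w"
proof (cases "dir_dist \<Omega> w x")
  case (real a)
  obtain e where e: "e > 0" "ball x e \<subseteq> \<Omega>" using om x by (auto simp: open_contains_ball)
  have "ereal e \<le> ereal a" using dd_pos[OF e(2) e(1) w] real by simp
  then have a0: "a > 0" using e(1) by simp
  have me: "ereal (mdist \<Omega> r x w) = min (ereal a) (ereal r)" using mdist_eq[of r \<Omega> x w] r real by simp
  show ?thesis
  proof (cases "a < r")
    case True
    then have "mdist \<Omega> r x w = a" using me by (simp add: min_def)
    then have "uu \<Omega> r x w = a / r" by (simp add: uu_def)
    then have "g \<le> 1 / (a + l) powr \<alpha>" using h2 a0 True by blast
    then show ?thesis unfolding inv_dist_pow_def real by (simp add: ennreal_leI)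
  next
    case False
    then have "mdist \<Omega> r x w = r" using me by (cases "a = r") (auto simp: min_def)
    then have "uu \<Omega> r x w = 1" using r by (simp add: uu_def)
    then have "g \<le> 0" using h1 by blast
    then show ?thesis by (simp add: ennreal_neg)
  qed
next
  case PInf
  have "ereal (mdist \<Omega> r x w) = ereal r" using mdist_eq[of r \<Omega> x w] r PInf by simp
  then have "uu \<Omega> r x w = 1" using r by (simp add: uu_def)
  then have "g \<le> 0" using h1 by blast
  then show ?thesis by (simp add: ennreal_neg)
next
  case MInf
  then show ?thesis using dd_nonneg[of \<Omega> w x] by simp
qed

lemma p_props:
  fixes \<Omega> :: "'a::euclidean_space set"
  assumes om: "open \<Omega>" and x: "x \<in> \<Omega>" and r: "r > 0" and w: "norm w = 1"
  shows "0 < uu \<Omega> r x w" "uu \<Omega> r x w \<le> 1" "0 \<le> uu \<Omega> r x w ^ n" "uu \<Omega> r x w ^ n \<le> 1"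
    "\<bar>uu \<Omega> r x w ^ n\<bar> \<le> 1"
  using uu_pos[OF om x r w] uu_le1[OF r, of \<Omega> x w] by (auto simp: power_le_one)

lemma Ip_bound:
  fixes \<Omega> :: "'a::euclidean_space set"
  assumes om: "open \<Omega>" and x: "x \<in> \<Omega>" and r: "r > 0"
  shows "Iop (\<lambda>w. uu \<Omega> r x w ^ DIM('a)) \<le> psi \<Omega> r x * measure lborel (ball (0::'a) 1)"
proof -
  have "Iop (\<lambda>w. uu \<Omega> r x w ^ DIM('a)) \<le> measure lborel {y \<in> ball 0 1. x + r *\<^sub>R y \<in> \<Omega>}"
    unfolding Iop_def using key_lim[OF om x r] by simp
  also have "\<dots> = psi \<Omega> r x * measure lborel (ball (0::'a) 1)"
    unfolding psi_eq[OF r om] using V_pos[where 'a='a] by simp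
  finally show ?thesis .
qed

lemma alg_lin:
  fixes A V Ip psi :: real
  assumes "A \<ge> 0" "Ip \<le> psi * V"
  shows "(A * (1 - psi)) * V \<le> A * V + (- A) * Ip"
proof -
  have "A * Ip \<le> A * (psi * V)" using assms by (intro mult_left_mono) auto
  then show ?thesis by (simp add: algebra_simps)
qed

lemma part_lin:
  fixes \<Omega> :: "'a::euclidean_space set"
  assumes om: "open \<Omega>" and x: "x \<in> \<Omega>" and r: "r > 0" and A: "A \<ge> 0"
    and hpt: "\<And>a. 0 < a \<Longrightarrow> a < r \<Longrightarrow> A * (1 - (a / r) ^ DIM('a)) \<le> 1 / (a + l) powr \<alpha>"
  shows "ennreal (A * (1 - psi \<Omega> r x)) \<le> avg_inv_dist \<Omega> \<alpha> l x"
proof (rule avg_bound[where g="\<lambda>w. A + (- A) * uu \<Omega> r x w ^ DIM('a)" and M="A + A"])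
  note [measurable] = uu_meas[OF om r, of x]
  show "(\<lambda>w. A + - A * uu \<Omega> r x w ^ DIM('a)) \<in> borel_measurable borel" by measurable
  fix w :: 'a assume w: "norm w = 1"
  note pp = p_props[OF om x r w]
  show "\<bar>A + - A * uu \<Omega> r x w ^ DIM('a)\<bar> \<le> A + A"
    using mult_left_mono[OF pp(4)[of "DIM('a)"] A] mult_nonneg_nonneg[OF A pp(3)[of "DIM('a)"]] A by (auto simp: abs_le_iff)
  show "ennreal (A + - A * uu \<Omega> r x w ^ DIM('a)) \<le> inv_dist_pow \<Omega> \<alpha> l x w"
  proof (rule pw_gen[OF om x r w])
    show "uu \<Omega> r x w = 1 \<Longrightarrow> A + - A * uu \<Omega> r x w ^ DIM('a) \<le> 0" by simp
    fix a assume a: "0 < a" "a < r" "uu \<Omega> r x w = a / r"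
    show "A + - A * uu \<Omega> r x w ^ DIM('a) \<le> 1 / (a + l) powr \<alpha>"
      using hpt[OF a(1,2)] a(3) by (simp add: algebra_simps)
  qed
next
  have "Iop (\<lambda>w. A + (- A) * uu \<Omega> r x w ^ DIM('a)) =
      A * measure lborel (ball (0::'a) 1) + (- A) * Iop (\<lambda>w. uu \<Omega> r x w ^ DIM('a))"
  proof (rule Iop_affine[where M=1])
    note [measurable] = uu_meas[OF om r, of x]
    show "(\<lambda>w. uu \<Omega> r x w ^ DIM('a)) \<in> borel_measurable borel" by measurable
    show "\<bar>uu \<Omega> r x w ^ DIM('a)\<bar> \<le> 1" if "norm w = 1" for w using p_props[OF om x r that] by simp
  qed
  then show "A * (1 - psi \<Omega> r x) * measure lborel (ball (0::'a) 1) \<le> Iop (\<lambda>w. A + - A * uu \<Omega> r x w ^ DIM('a))"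
    using alg_lin[OF A Ip_bound[OF om x r]] by simp
qed

lemma part3:
  fixes \<Omega> :: "'a::euclidean_space set"
  assumes om: "open \<Omega>" and x: "x \<in> \<Omega>" and r: "r > 0" and l: "l \<ge> 0" and al: "\<alpha> > 0"
  shows "ennreal ((1 / (r + l) powr \<alpha>) * (1 - psi \<Omega> r x)) \<le> avg_inv_dist \<Omega> \<alpha> l x"
proof (rule part_lin[OF om x r])
  show "0 \<le> 1 / (r + l) powr \<alpha>" by simp
  fix a assume a: "0 < a" "a < r"
  have "0 \<le> (a / r) ^ DIM('a)" using a r by simp
  then have "1 / (r + l) powr \<alpha> * (1 - (a / r) ^ DIM('a)) \<le> 1 / (r + l) powr \<alpha> * 1"
    by (intro mult_left_mono) auto
  also have "\<dots> \<le> 1 / (a + l) powr \<alpha>"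
  proof -
    have "(a + l) powr \<alpha> \<le> (r + l) powr \<alpha>" using a l al by (intro powr_mono2) auto
    moreover have "0 < (a + l) powr \<alpha>" using a l by simp
    ultimately show ?thesis by (simp add: frac_le)
  qed
  finally show "1 / (r + l) powr \<alpha> * (1 - (a / r) ^ DIM('a)) \<le> 1 / (a + l) powr \<alpha>" .
qed

lemma part2:
  fixes \<Omega> :: "'a::euclidean_space set"
  assumes om: "open \<Omega>" and x: "x \<in> \<Omega>" and r: "r > 0" and al: "\<alpha> > 0"
  shows "ennreal ((1 / r powr \<alpha>) * ((real DIM('a) + \<alpha>) / \<alpha>) powr (\<alpha> / real DIM('a))
                       * ((real DIM('a) + \<alpha>) / real DIM('a)) * (1 - psi \<Omega> r x)) \<le> avg_inv_dist \<Omega> \<alpha> 0 x"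
proof (rule part_lin[OF om x r])
  define Cst where "Cst = ((real DIM('a) + \<alpha>) / \<alpha>) powr (\<alpha> / real DIM('a)) * ((real DIM('a) + \<alpha>) / real DIM('a))"
  have K: "(1 / r powr \<alpha>) * ((real DIM('a) + \<alpha>) / \<alpha>) powr (\<alpha> / real DIM('a)) * ((real DIM('a) + \<alpha>) / real DIM('a))
      = Cst / r powr \<alpha>" by (simp add: Cst_def)
  have C0: "Cst \<ge> 0" using al by (simp add: Cst_def)
  show "0 \<le> (1 / r powr \<alpha>) * ((real DIM('a) + \<alpha>) / \<alpha>) powr (\<alpha> / real DIM('a)) * ((real DIM('a) + \<alpha>) / real DIM('a))"
    unfolding K using C0 by simp
  fix a assume a: "0 < a" "a < r"
  define t where "t = a / r"
  have t: "0 < t" "t \<le> 1" using a r by (auto simp: t_def)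
  define P where "P = a powr \<alpha>"
  define R where "R = r powr \<alpha>"
  have P: "P > 0" and R: "R > 0" using a r by (auto simp: P_def R_def)
  have tp: "t powr \<alpha> = P / R" using a r by (simp add: t_def P_def R_def powr_divide)
  have am: "Cst * (1 - t ^ DIM('a)) * (P / R) \<le> 1"
    using amgm_bound[OF t al, of "DIM('a)"] unfolding tp by (simp add: Cst_def mult_ac)
  have "Cst / R * (1 - t ^ DIM('a)) = (Cst * (1 - t ^ DIM('a)) * (P / R)) / P"
    using P R by (simp add: field_simps)
  also have "\<dots> \<le> 1 / P" using am P by (intro divide_right_mono) auto
  finally show "(1 / r powr \<alpha>) * ((real DIM('a) + \<alpha>) / \<alpha>) powr (\<alpha> / real DIM('a)) * ((real DIM('a) + \<alpha>) / real DIM('a))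
      * (1 - (a / r) ^ DIM('a)) \<le> 1 / (a + 0) powr \<alpha>"
    unfolding K by (simp add: t_def P_def R_def)
qed

lemma part1:
  fixes \<Omega> :: "'a::euclidean_space set"
  assumes om: "open \<Omega>" and x: "x \<in> \<Omega>" and r: "r > 0" and al: "\<alpha> > 0"
  shows "ennreal ((1 / r powr \<alpha>) * (psi \<Omega> r x powr (- \<alpha> / real DIM('a)) - 1)) \<le> avg_inv_dist \<Omega> \<alpha> 0 x"
proof (cases "psi \<Omega> r x > 0")
  case False
  have "psi \<Omega> r x \<ge> 0" unfolding psi_def by simp
  then have "psi \<Omega> r x = 0" using False by simp
  then have "psi \<Omega> r x powr (- \<alpha> / real DIM('a)) = 0" by simp
  then show ?thesis by (simp add: ennreal_neg)
next
  case True
  define \<psi> where "\<psi> = psi \<Omega> r x"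
  have ps: "\<psi> > 0" using True by (simp add: \<psi>_def)
  define \<beta> where "\<beta> = \<alpha> / real DIM('a)"
  have be: "\<beta> > 0" using al by (simp add: \<beta>_def)
  define P where "P = \<psi> powr (-\<beta>)"
  define Q where "Q = \<psi> powr (-\<beta> - 1)"
  define R where "R = 1 / r powr \<alpha>"
  have R: "R > 0" using r by (simp add: R_def)
  have Q: "Q > 0" using ps by (simp add: Q_def)
  define A1 where "A1 = R * (P - 1) + R * \<beta> * Q * \<psi>"
  define B1 where "B1 = - (R * \<beta> * Q)"
  have tgt: "(1 / r powr \<alpha>) * (psi \<Omega> r x powr (- \<alpha> / real DIM('a)) - 1) = R * (P - 1)"
    by (simp add: R_def P_def \<psi>_def \<beta>_def)
  note [measurable] = uu_meas[OF om r, of x]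
  show ?thesis unfolding tgt
  proof (rule avg_bound[where g="\<lambda>w. A1 + B1 * uu \<Omega> r x w ^ DIM('a)" and M="\<bar>A1\<bar> + \<bar>B1\<bar>"])
    show "(\<lambda>w. A1 + B1 * uu \<Omega> r x w ^ DIM('a)) \<in> borel_measurable borel" by measurable
    fix w :: 'a assume w: "norm w = 1"
    note pp = p_props[OF om x r w]
    have "\<bar>B1 * uu \<Omega> r x w ^ DIM('a)\<bar> \<le> \<bar>B1\<bar> * 1"
      unfolding abs_mult using pp(5)[of "DIM('a)"] by (intro mult_left_mono) auto
    then show "\<bar>A1 + B1 * uu \<Omega> r x w ^ DIM('a)\<bar> \<le> \<bar>A1\<bar> + \<bar>B1\<bar>" by linarith
    show "ennreal (A1 + B1 * uu \<Omega> r x w ^ DIM('a)) \<le> inv_dist_pow \<Omega> \<alpha> 0 x w"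
    proof (rule pw_gen[OF om x r w])
      assume u1: "uu \<Omega> r x w = 1"
      have "P - \<beta> * Q * (1 - \<psi>) \<le> 1 powr (-\<beta>)"
        using tangent_powr[of 1 \<psi> \<beta>] ps be by (simp add: P_def Q_def)
      then have "P - \<beta> * Q * (1 - \<psi>) - 1 \<le> 0" by simp
      then have "R * (P - \<beta> * Q * (1 - \<psi>) - 1) \<le> 0" using R by (simp add: mult_nonneg_nonpos)
      then show "A1 + B1 * uu \<Omega> r x w ^ DIM('a) \<le> 0"
        unfolding u1 by (simp add: A1_def B1_def algebra_simps)
    next
      fix a assume a: "0 < a" "a < r" "uu \<Omega> r x w = a / r"
      define t where "t = a / r"
      have t: "t > 0" using a r by (simp add: t_def)
      have "P - \<beta> * Q * (t ^ DIM('a) - \<psi>) \<le> (t ^ DIM('a)) powr (-\<beta>)"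
        using tangent_powr[of "t ^ DIM('a)" \<psi> \<beta>] ps be t by (simp add: P_def Q_def)
      also have "(t ^ DIM('a)) powr (-\<beta>) = t powr (- \<alpha>)"
        using t by (simp add: powr_realpow[symmetric] powr_powr \<beta>_def)
      finally have h: "P - \<beta> * Q * (t ^ DIM('a) - \<psi>) - 1 \<le> t powr (- \<alpha>)" by simp
      have "A1 + B1 * uu \<Omega> r x w ^ DIM('a) = R * (P - \<beta> * Q * (t ^ DIM('a) - \<psi>) - 1)"
        unfolding a(3) t_def[symmetric] by (simp add: A1_def B1_def algebra_simps)
      also have "\<dots> \<le> R * t powr (- \<alpha>)" using h R by (intro mult_left_mono) auto
      also have "R * t powr (- \<alpha>) = 1 / (a + 0) powr \<alpha>"
        using a r by (simp add: R_def t_def powr_minus powr_divide)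
      finally show "A1 + B1 * uu \<Omega> r x w ^ DIM('a) \<le> 1 / (a + 0) powr \<alpha>" .
    qed
  next
    have "Iop (\<lambda>w. A1 + B1 * uu \<Omega> r x w ^ DIM('a)) =
        A1 * measure lborel (ball (0::'a) 1) + B1 * Iop (\<lambda>w. uu \<Omega> r x w ^ DIM('a))"
    proof (rule Iop_affine[where M=1])
      show "(\<lambda>w. uu \<Omega> r x w ^ DIM('a)) \<in> borel_measurable borel" by measurable
      show "\<bar>uu \<Omega> r x w ^ DIM('a)\<bar> \<le> 1" if "norm w = 1" for w using p_props[OF om x r that] by simp
    qed
    moreover have "B1 * Iop (\<lambda>w. uu \<Omega> r x w ^ DIM('a)) \<ge> B1 * (\<psi> * measure lborel (ball (0::'a) 1))"
      using Ip_bound[OF om x r] R Q be unfolding \<psi>_def B1_def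
      by (intro mult_left_mono_neg) auto
    ultimately show "R * (P - 1) * measure lborel (ball (0::'a) 1) \<le> Iop (\<lambda>w. A1 + B1 * uu \<Omega> r x w ^ DIM('a))"
      by (simp add: A1_def B1_def algebra_simps)
  qed
qed

theorem lemma3p1:
  fixes \<Omega> :: "'a::euclidean_space set" and \<alpha> :: real
  assumes "DIM('a) \<ge> 2" and "open \<Omega>" and "\<alpha> > 0"
  shows "(\<forall>x\<in>\<Omega>. \<forall>r>0.
            avg_inv_dist \<Omega> \<alpha> 0 x \<ge>
              ennreal ((1 / r powr \<alpha>) * (psi \<Omega> r x powr (- \<alpha> / real DIM('a)) - 1)))
       \<and> (\<forall>x\<in>\<Omega>. \<forall>r>0.
            avg_inv_dist \<Omega> \<alpha> 0 x \<ge>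
              ennreal ((1 / r powr \<alpha>) * ((real DIM('a) + \<alpha>) / \<alpha>) powr (\<alpha> / real DIM('a))
                       * ((real DIM('a) + \<alpha>) / real DIM('a)) * (1 - psi \<Omega> r x)))
       \<and> (\<forall>l\<ge>0. \<forall>x\<in>\<Omega>. \<forall>r>0.
            avg_inv_dist \<Omega> \<alpha> l x \<ge> ennreal ((1 / (r + l) powr \<alpha>) * (1 - psi \<Omega> r x)))"
  using part1[OF assms(2) _ _ assms(3)] part2[OF assms(2) _ _ assms(3)] part3[OF assms(2) _ _ _ assms(3)]
  by blast

end
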